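(* Let $r>1$, $0<a<r$ coprime, $\theta\in\Theta$ and $j\in\{0,\dots,r-1\}$. The representation $\mathcal F_j$ is $\theta$-stable (resp. $\theta$-semistable) if and only if $\theta(V_{i,j})>0$ (resp. $\ge0$) for every vertex $i$ for which $V_{i,j}$ is a non-empty proper subset of the vertices forming a subrepresentation of $\mathcal F_j$, and $\theta(W_{i,j})>0$ (resp. $\ge0$) for every vertex $i$ for which $W_{i,j}$ is a non-empty proper subset of the vertices forming a subrepresentation of $\mathcal F_j$.
   Context: Notation: for integers $s$ and $t>0$, $\langle s\rangle_t$ is the least non-negative integer congruent to $s$ modulo $t$. A pair of integers $(r,a)$ is admissible if $r\ge1$, $0\le a<r$, $\gcd(r,a)=1$ (so $a=0$ only for $r=1$). For admissible $(r,a)$ put $N(r,a)=\mathbb Z^3+\mathbb Z\cdot\frac1r(1,a,r-a)\subset\mathbb Q^3$; $e_1,e_2,e_3$ is the standard basis and $\Delta(r,a)$ the cone spanned by $e_1,e_2,e_3$. Let $b$ be an inverse of $a$ modulo $r$ and $p_i=\frac1r(\langle -ib\rangle_r,r-i,i)$, $i=0,\dots,r$ (so $p_0=e_2$, $p_r=e_3$, $p_{r-a}=\frac1r(1,a,r-a)$). For $r>1$ let $(r_L,a_L)=(r-a,\langle r\rangle_{r-a})$, $(r_R,a_R)=(a,\langle -r\rangle_a)$; there are lattice isomorphisms $L:N(r_L,a_L)\to N(r,a)$, $R:N(r_R,a_R)\to N(r,a)$ with $L(e_1)=e_1$, $L(e_2)=e_2$, $L(e_3)=p_{r-a}$, $R(e_1)=e_1$,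 $R(e_2)=p_{r-a}$, $R(e_3)=e_3$. The Danilov fan $\Sigma(r,a)$ is defined recursively: $\Sigma(1,0)$ is $\Delta(1,0)$ with its faces; for $r>1$, $\Sigma(r,a)$ consists of the cone spanned by $e_2,e_3,p_{r-a}$ with its faces, together with $L(\Sigma(r_L,a_L))$ and $R(\Sigma(r_R,a_R))$. The Danilov resolution $Y$ is the smooth toric variety of $\Sigma(r,a)$, with torus $T$; its rays are spanned by $e_1,p_0,\dots,p_r$; $D_i$ is the $T$-invariant prime divisor of the ray through $p_i$ and $E_j$ that of $e_j$. For a $3$-dimensional cone $\sigma$, $U_\sigma\cong\mathbb C^3$ is its affine chart; for $j=0,\dots,r-1$, $\sigma_j$ is the cone spanned by $p_j,p_{j+1},e_1$ (a cone of $\Sigma(r,a)$). The permutation $\tau(r,a,\cdot)$ of $\{0,\dots,r-1\}$: if $a\in\{1,r-1\}$, $\tau(r,a,i)=\langle ai-1\rangle_r$; otherwise $\tau(r,a,i)=\tau(r-a,\langle r\rangle_{r-a},\langle i\rangle_{r-a})$ for $i\ge a$ and $\tau(r,a,i)=(r-a)+\tau(a,\langle -r\rangle_a,i)$ for $i<a$; $\xi(r,a,\cdot)$ is its inverse. With indices mod $r$, on $Y$ define $Y_{i-a}=\sum_{k=0}^{\tau(r,a,i)}D_k$, $Z_i=\sum_{k=\tau(r,a,i)+1}^{r}D_k$ ($i=0,\dots,r-1$), and $X_0,\dots,X_{r-1}$ the unique divisors with $X_0=E_1$ and $X_i+Z_{i+1}=Z_i+X_{i-a}$; these satisfy $X_i+Y_{i+1}=Y_i+X_{i+a}$,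 $X_i+Z_{i+1}=Z_i+X_{i-a}$, $Y_i+Z_{i+a}=Z_i+Y_{i-a}$. The McKay quiver has vertices $0,\dots,r-1$ (mod $r$) and arrows $x_i:i\to i+1$, $y_i:i\to i+a$, $z_i:i\to i-a$; a representation assigns a complex number $V(\alpha)$ to each arrow with $V(y_{i+1})V(x_i)=V(x_{i+a})V(y_i)$, $V(z_{i+1})V(x_i)=V(x_{i-a})V(z_i)$, $V(y_{i-a})V(z_i)=V(z_{i+a})V(y_i)$. Subrepresentations of $V$ correspond to subsets $S$ of vertices such that whenever an arrow $\alpha$ has tail in $S$ and $V(\alpha)\ne0$, its head is in $S$. $\Theta=\{\theta\in\mathbb Q^r:\sum_i\theta_i=0\}$, $\theta(S)=\sum_{i\in S}\theta_i$; $V$ is $\theta$-stable (resp. semistable) if $\theta(S)>0$ (resp. $\ge0$) for all non-empty proper such $S$. The family $\mathcal F$ on $Y$ consists of the line bundles $\mathcal O(X_i),\mathcal O(Y_i),\mathcal O(Z_i)$ with their canonical sections; concretely, for $s\in U_\sigma$, each effective $T$-invariant divisor $D$ restricts on $U_\sigma$ to the divisor of a unique monomial $f_{\sigma,D}$ in the toric coordinates of $U_\sigma$, and $\mathcal F_s$ is the representation with $x_i,y_i,z_i$ represented by $f_{\sigma,X_i}(s),f_{\sigma,Y_i}(s),f_{\sigma,Z_i}(s)$. $\mathcal F_j$ denotes $\mathcal F_s$ for $s$ the $T$-fixed point of $U_{\sigma_j}$. For a vertex $i$ and $j\in\{0,\dots,r-1\}$: $V_{i,j}$ is the set of vertices $i,\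 i+(r-a),\ i+2(r-a),\dots$ (mod $r$) up to and including the first occurrence of $\xi(r,a,j)$; $W_{i,j}$ is the set of vertices $\xi(r,a,j)+(r-a),\ \xi(r,a,j)+2(r-a),\dots$ (mod $r$) up to and including the first occurrence of $i$. *)

theory Defs
  imports Complex_Main "HOL-Library.Function_Algebras"
begin

function tau :: "nat \<Rightarrow> nat \<Rightarrow> nat \<Rightarrow> nat" where
  "tau r a i =
    (if r \<le> 1 \<or> a = 0 \<or> r \<le> a then 0
     else if a = 1 \<or> a = r - 1 then (a * i + r - 1) mod r
     else if a \<le> i then tau (r - a) (r mod (r - a)) (i mod (r - a))
     else (r - a) + tau a ((a - r mod a) mod a) i)"
  by pat_completeness auto
termination
  by (relation "measure (\<lambda>(r, a, i). r)") auto

definition xi :: "nat \<Rightarrow> nat \<Rightarrow> nat \<Rightarrow> nat" where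
  "xi r a j = (THE i. i < r \<and> tau r a i = j)"

text \<open>The rays of Sigma(r,a) are spanned by e_1, p_0, ..., p_r.  We index the
  T-invariant prime divisors by \<open>nat option\<close>: \<open>None\<close> is E_1 (ray e_1),
  \<open>Some k\<close> is D_k (ray p_k).\<close>

type_synonym divisor = "nat option \<Rightarrow> int"

definition primD :: "nat option \<Rightarrow> divisor" where
  "primD \<rho> = (\<lambda>\<rho>'. if \<rho>' = \<rho> then 1 else 0)"

definition E1 :: divisor where "E1 = primD None"

definition Ddiv :: "nat \<Rightarrow> divisor" where "Ddiv k = primD (Some k)"

definition Ydiv :: "nat \<Rightarrow> nat \<Rightarrow> nat \<Rightarrow> divisor" where
  \<comment> \<open>Y_{i-a} = sum_{k=0}^{tau(i)} D_k, i.e. Y_m = sum_{k=0}^{tau(m+a)} D_k\<close>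
  "Ydiv r a m = (\<Sum>k\<in>{0..tau r a ((m + a) mod r)}. Ddiv k)"

definition Zdiv :: "nat \<Rightarrow> nat \<Rightarrow> nat \<Rightarrow> divisor" where
  "Zdiv r a i = (\<Sum>k\<in>{tau r a (i mod r) + 1..r}. Ddiv k)"

definition Xdiv :: "nat \<Rightarrow> nat \<Rightarrow> nat \<Rightarrow> divisor" where
  "Xdiv r a = (THE X. X 0 = E1 \<and> (\<forall>i\<ge>r. X i = 0) \<and>
      (\<forall>i<r. X i + Zdiv r a ((i + 1) mod r) = Zdiv r a i + X ((i + r - a) mod r)))"

text \<open>The cone sigma_j is spanned by p_j, p_{j+1}, e_1; its chart U_{sigma_j} is C^3
  with coordinates u_0, u_1, u_2, where u_k vanishes exactly along the prime divisor
  of the k-th ray.  An effective T-invariant divisor D restricts on U_sigma to the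
  divisor of the monomial prod_k u_k^(coefficient of D on the k-th ray).\<close>

definition sigma_ray :: "nat \<Rightarrow> nat \<Rightarrow> nat option" where
  "sigma_ray j k = (if k = 0 then Some j else if k = 1 then Some (j + 1) else None)"

definition monomial_val :: "nat \<Rightarrow> divisor \<Rightarrow> (nat \<Rightarrow> complex) \<Rightarrow> complex" where
  "monomial_val j D s = (\<Prod>k<3. s k ^ nat (D (sigma_ray j k)))"

definition fixed_point :: "nat \<Rightarrow> complex" where
  "fixed_point = (\<lambda>_. 0)"

datatype arrow = ArrX nat | ArrY nat | ArrZ nat

definition arr_tail :: "nat \<Rightarrow> nat \<Rightarrow> arrow \<Rightarrow> nat" where
  "arr_tail r a \<alpha> = (case \<alpha> of ArrX i \<Rightarrow> i | ArrY i \<Rightarrow> i | ArrZ i \<Rightarrow> i)"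

definition arr_head :: "nat \<Rightarrow> nat \<Rightarrow> arrow \<Rightarrow> nat" where
  "arr_head r a \<alpha> = (case \<alpha> of ArrX i \<Rightarrow> (i + 1) mod r
                               | ArrY i \<Rightarrow> (i + a) mod r
                               | ArrZ i \<Rightarrow> (i + r - a) mod r)"

definition arrows :: "nat \<Rightarrow> arrow set" where
  "arrows r = {ArrX i | i. i < r} \<union> {ArrY i | i. i < r} \<union> {ArrZ i | i. i < r}"

definition is_subrep :: "nat \<Rightarrow> nat \<Rightarrow> (arrow \<Rightarrow> complex) \<Rightarrow> nat set \<Rightarrow> bool" where
  "is_subrep r a V S \<longleftrightarrow> S \<subseteq> {0..<r} \<and>
     (\<forall>\<alpha>\<in>arrows r. arr_tail r a \<alpha> \<in> S \<and> V \<alpha> \<noteq> 0 \<longrightarrow> arr_head r a \<alpha> \<in> S)"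

definition Theta :: "nat \<Rightarrow> (nat \<Rightarrow> rat) set" where
  "Theta r = {\<theta>. (\<Sum>i<r. \<theta> i) = 0}"

definition theta_of :: "(nat \<Rightarrow> rat) \<Rightarrow> nat set \<Rightarrow> rat" where
  "theta_of \<theta> S = (\<Sum>i\<in>S. \<theta> i)"

definition stable :: "nat \<Rightarrow> nat \<Rightarrow> (nat \<Rightarrow> rat) \<Rightarrow> (arrow \<Rightarrow> complex) \<Rightarrow> bool" where
  "stable r a \<theta> V \<longleftrightarrow> (\<forall>S. is_subrep r a V S \<and> S \<noteq> {} \<and> S \<noteq> {0..<r} \<longrightarrow> theta_of \<theta> S > 0)"

definition semistable :: "nat \<Rightarrow> nat \<Rightarrow> (nat \<Rightarrow> rat) \<Rightarrow> (arrow \<Rightarrow> complex) \<Rightarrow> bool" where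
  "semistable r a \<theta> V \<longleftrightarrow> (\<forall>S. is_subrep r a V S \<and> S \<noteq> {} \<and> S \<noteq> {0..<r} \<longrightarrow> theta_of \<theta> S \<ge> 0)"

definition Frep :: "nat \<Rightarrow> nat \<Rightarrow> nat \<Rightarrow> (nat \<Rightarrow> complex) \<Rightarrow> arrow \<Rightarrow> complex" where
  "Frep r a j s \<alpha> = (case \<alpha> of
       ArrX i \<Rightarrow> monomial_val j (Xdiv r a i) s
     | ArrY i \<Rightarrow> monomial_val j (Ydiv r a i) s
     | ArrZ i \<Rightarrow> monomial_val j (Zdiv r a i) s)"

definition Fj :: "nat \<Rightarrow> nat \<Rightarrow> nat \<Rightarrow> arrow \<Rightarrow> complex" where
  "Fj r a j = Frep r a j fixed_point"

definition Vset :: "nat \<Rightarrow> nat \<Rightarrow> nat \<Rightarrow> nat \<Rightarrow> nat set" where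
  "Vset r a i j =
    (let n = (LEAST n. (i + n * (r - a)) mod r = xi r a j)
     in {(i + k * (r - a)) mod r | k. k \<le> n})"

definition Wset :: "nat \<Rightarrow> nat \<Rightarrow> nat \<Rightarrow> nat \<Rightarrow> nat set" where
  "Wset r a i j =
    (let m = (LEAST m. 1 \<le> m \<and> (xi r a j + m * (r - a)) mod r = i)
     in {(xi r a j + k * (r - a)) mod r | k. 1 \<le> k \<and> k \<le> m})"

end

theory Submission
  imports Defs "HOL-Number_Theory.Cong"
begin


declare tau.simps[simp del]

lemma tau_lin:
  assumes "0 < a" "a < r" "a = 1 \<or> a = r - 1"
  shows "tau r a i = (a * i + r - 1) mod r"
  using assms by (subst tau.simps) auto

lemma tau_rec:
  assumes "1 < a" "a + 1 < r"
  shows "tau r a i = (if a \<le> i then tau (r - a) (r mod (r - a)) (i mod (r - a))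
     else (r - a) + tau a ((a - r mod a) mod a) i)"
  using assms by (subst tau.simps) auto

lemma tau_bij: "0 < r \<Longrightarrow> a < r \<Longrightarrow> coprime r a \<Longrightarrow> bij_betw (tau r a) {0..<r} {0..<r}"
proof (induction r arbitrary: a rule: less_induct)
  case (less r)
  show ?case
  proof (cases "r = 1")
    case True
    then have "tau r a i = 0" for i by (subst tau.simps) auto
    then show ?thesis using True by (simp add: bij_betw_def inj_on_def)
  next
    case False
    with less.prems have r2: "2 \<le> r" by auto
    have a0: "a \<noteq> 0"
    proof
      assume "a = 0" then have "r = 1" using less.prems by simp
      then show False using False by simp
    qed
    have key: "inj_on (tau r a) {0..<r} \<and> tau r a ` {0..<r} \<subseteq> {0..<r}"
    proof (cases "a = 1 \<or> a = r - 1")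
      case True
      have t: "tau r a i = (a * i + r - 1) mod r" for i
        using tau_lin[OF _ _ True] a0 less.prems by auto
      have "inj_on (tau r a) {0..<r}"
      proof (rule inj_onI)
        fix x y assume x: "x \<in> {0..<r}" and y: "y \<in> {0..<r}" and e: "tau r a x = tau r a y"
        have "[a * x + (r - 1) = a * y + (r - 1)] (mod r)"
          using e r2 unfolding t cong_def by (simp add: add.assoc)
        then have "[a * x = a * y] (mod r)" by (simp add: cong_add_rcancel_nat)
        then have "[x = y] (mod r)"
          using less.prems(3) by (simp add: cong_mult_lcancel_nat coprime_commute)
        then show "x = y" using x y cong_less_imp_eq_nat by auto
      qed
      moreover have "tau r a ` {0..<r} \<subseteq> {0..<r}" using r2 by (auto simp: t)
      ultimately show ?thesis by blast
    next
      case nt: False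
      have a1: "1 < a" "a + 1 < r" using nt a0 less.prems by auto
      define s where "s = r - a"
      have s2: "2 \<le> s" using a1 s_def by auto
      have "gcd (r - a) r = gcd a r" using a1 by (simp add: gcd_diff2_nat)
      then have "coprime s r" using less.prems(3) s_def
        by (simp add: coprime_iff_gcd_eq_1 gcd.commute)
      then have cpL: "coprime s (r mod s)" using s2 by (simp add: coprime_mod_right_iff)
      have IHL: "bij_betw (tau s (r mod s)) {0..<s} {0..<s}"
        using less.IH[of s "r mod s"] cpL s_def a1 by auto
      have rma: "r mod a \<noteq> 0"
      proof
        assume "r mod a = 0"
        then have "a dvd r" by auto
        then have "a dvd gcd r a" by simp
        then show False using less.prems(3) a1 by auto
      qed
      have cpR: "coprime a ((a - r mod a) mod a)"
      proof -
        have m: "(a - r mod a) mod a = a - r mod a" using rma a1 by auto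
        have "coprime a (r mod a)" using less.prems(3) a1
          by (simp add: coprime_commute coprime_mod_right_iff)
        moreover have "gcd (a - r mod a) a = gcd (r mod a) a"
          using a1 by (simp add: gcd_diff2_nat)
        ultimately show ?thesis unfolding m
          by (simp add: coprime_iff_gcd_eq_1 gcd.commute)
      qed
      have IHR: "bij_betw (tau a ((a - r mod a) mod a)) {0..<a} {0..<a}"
        using less.IH[of a "(a - r mod a) mod a"] cpR a1 less.prems by auto
      have t: "tau r a i = (if a \<le> i then tau s (r mod s) (i mod s)
           else s + tau a ((a - r mod a) mod a) i)" for i
        using tau_rec[OF a1] s_def by simp
      let ?L = "tau s (r mod s)" and ?R = "tau a ((a - r mod a) mod a)"
      have Lr: "?L k < s" if "k < s" for k using IHL that by (auto simp: bij_betw_def)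
      have Rr: "?R k < a" if "k < a" for k using IHR that by (auto simp: bij_betw_def)
      have Li: "?L x = ?L y \<Longrightarrow> x < s \<Longrightarrow> y < s \<Longrightarrow> x = y" for x y
        using IHL by (auto simp: bij_betw_def inj_on_def)
      have Ri: "?R x = ?R y \<Longrightarrow> x < a \<Longrightarrow> y < a \<Longrightarrow> x = y" for x y
        using IHR by (auto simp: bij_betw_def inj_on_def)
      have "inj_on (tau r a) {0..<r}"
      proof (rule inj_onI)
        fix x y assume x: "x \<in> {0..<r}" and y: "y \<in> {0..<r}" and e: "tau r a x = tau r a y"
        show "x = y"
        proof (cases "a \<le> x")
          case ax: True
          show ?thesis
          proof (cases "a \<le> y")
            case ay: True
            have "x mod s = y mod s" using e ax ay Li[of "x mod s" "y mod s"] s2 unfolding t by auto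
            then have "[(x - a) + a = (y - a) + a] (mod s)" using ax ay by (simp add: cong_def)
            then have "[x - a = y - a] (mod s)" by (simp add: cong_add_rcancel_nat)
            moreover have "x - a < s" "y - a < s" using ax ay x y s_def by auto
            ultimately have "x - a = y - a" using cong_less_imp_eq_nat by blast
            then show ?thesis using ax ay by simp
          next
            case ay: False
            then show ?thesis using e ax Lr[of "x mod s"] s2 unfolding t by auto
          qed
        next
          case ax: False
          show ?thesis
          proof (cases "a \<le> y")
            case ay: True
            then show ?thesis using e ax Lr[of "y mod s"] s2 unfolding t by auto
          next
            case ay: False
            then show ?thesis using e ax Ri[of x y] unfolding t by auto
          qed
        qed
      qed
      moreover have "tau r a ` {0..<r} \<subseteq> {0..<r}"
      proof
        fix v assume "v \<in> tau r a ` {0..<r}"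
        then obtain i where i: "i < r" "v = tau r a i" by auto
        show "v \<in> {0..<r}"
        proof (cases "a \<le> i")
          case True
          have "?L (i mod s) < s" using Lr s2 by simp
          then show ?thesis using True s_def i unfolding t by (simp, linarith)
        next
          case False
          then have "?R i < a" using Rr by simp
          moreover have "v = s + ?R i" using False i unfolding t by simp
          ultimately show ?thesis using s_def a1 by simp
        qed
      qed
      ultimately show ?thesis by blast
    qed
    then show ?thesis
      using endo_inj_surj[of "{0..<r}" "tau r a"] by (auto simp: bij_betw_def)
  qed
qed



lemma chain_inj:
  fixes s r b :: nat
  assumes "coprime s r" "k < r" "k' < r" "(b + k*s) mod r = (b + k'*s) mod r"
  shows "k = k'"
proof -
  have "[b + k*s = b + k'*s] (mod r)" using assms(4) by (simp add: cong_def)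
  then have "[k*s = k'*s] (mod r)" by (simp add: cong_add_lcancel_nat)
  then have "[k = k'] (mod r)" using assms(1) by (simp add: cong_mult_rcancel_nat)
  then show ?thesis using assms(2,3) cong_less_imp_eq_nat by blast
qed

lemma chain_bij:
  fixes s r b :: nat
  assumes "coprime s r" "0 < r"
  shows "bij_betw (\<lambda>k. (b + k*s) mod r) {0..<r} {0..<r}"
proof -
  have inj: "inj_on (\<lambda>k. (b + k*s) mod r) {0..<r}"
  proof (rule inj_onI)
    fix x y assume "x \<in> {0..<r}" "y \<in> {0..<r}" "(b + x*s) mod r = (b + y*s) mod r"
    then show "x = y" using chain_inj[OF assms(1), of x y b] by simp
  qed
  have "(\<lambda>k. (b + k*s) mod r) ` {0..<r} \<subseteq> {0..<r}" using assms(2) by auto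
  then show ?thesis using endo_inj_surj[OF _ _ inj] inj by (auto simp: bij_betw_def)
qed

lemma reach:
  fixes s r :: nat and f :: "nat \<Rightarrow> 'b"
  assumes "coprime s r" "0 < r" "\<And>i. i < r \<Longrightarrow> f ((i + s) mod r) = f i"
  shows "i < r \<Longrightarrow> f i = f 0"
proof -
  have k: "f ((k*s) mod r) = f 0" for k
  proof (induction k)
    case 0 then show ?case by simp
  next
    case (Suc k)
    have "(Suc k * s) mod r = (k*s + s) mod r" by (simp add: add.commute)
    also have "\<dots> = ((k*s) mod r + s) mod r" by (simp add: mod_add_left_eq)
    finally have "(Suc k * s) mod r = ((k*s) mod r + s) mod r" .
    then show ?case using assms(3)[of "(k*s) mod r"] assms(2) Suc by simp
  qed
  assume "i < r"
  then have "i \<in> (\<lambda>k. (0 + k*s) mod r) ` {0..<r}"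
    using chain_bij[OF assms(1,2), of 0] by (simp add: bij_betw_def)
  then show ?thesis using k by auto
qed

lemma sum_fun_app: "finite A \<Longrightarrow> (\<Sum>k\<in>A. (f k :: 'x \<Rightarrow> 'y::comm_monoid_add)) x = (\<Sum>k\<in>A. f k x)"
  by (induction A rule: finite_induct) auto

lemma Ddiv_sum_Some: "finite A \<Longrightarrow> (\<Sum>k\<in>A. Ddiv k) (Some m) = (if m \<in> A then 1 else 0)"
  by (simp add: sum_fun_app Ddiv_def primD_def)

lemma Ddiv_sum_None: "finite A \<Longrightarrow> (\<Sum>k\<in>A. Ddiv k) None = 0"
  by (simp add: sum_fun_app Ddiv_def primD_def)

lemma Y_Some: "Ydiv r a m (Some k) = (if k \<le> tau r a ((m + a) mod r) then 1 else 0)"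
  unfolding Ydiv_def by (simp add: Ddiv_sum_Some)
lemma Y_None: "Ydiv r a m None = 0"
  unfolding Ydiv_def by (simp add: Ddiv_sum_None)
lemma Z_Some: "Zdiv r a i (Some k) = (if tau r a (i mod r) + 1 \<le> k \<and> k \<le> r then 1 else 0)"
  unfolding Zdiv_def by (simp add: Ddiv_sum_Some)
lemma Z_None: "Zdiv r a i None = 0"
  unfolding Zdiv_def by (simp add: Ddiv_sum_None)

lemma mono_val: "monomial_val j D fixed_point \<noteq> 0 \<longleftrightarrow>
   D (Some j) \<le> 0 \<and> D (Some (j+1)) \<le> 0 \<and> D None \<le> 0"
proof -
  have e: "{..<3::nat} = {0,1,2}" by auto
  show ?thesis unfolding monomial_val_def fixed_point_def e
    by (simp add: sigma_ray_def power_0_left)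
qed

definition Xcond :: "nat \<Rightarrow> nat \<Rightarrow> (nat \<Rightarrow> divisor) \<Rightarrow> bool" where
  "Xcond r a X \<longleftrightarrow> X 0 = E1 \<and> (\<forall>i\<ge>r. X i = 0) \<and>
      (\<forall>i<r. X i + Zdiv r a ((i + 1) mod r) = Zdiv r a i + X ((i + r - a) mod r))"

lemma gcd_sa: assumes "coprime (r::nat) a" "a < r" shows "coprime (r - a) r"
proof -
  have "gcd (r - a) r = gcd a r" using assms by (simp add: gcd_diff2_nat)
  then show ?thesis using assms by (simp add: coprime_iff_gcd_eq_1 gcd.commute)
qed

lemma Xcond_step:
  assumes "Xcond r a X" "i < r" "a < r"
  shows "X ((i + (r - a)) mod r) = (\<lambda>\<rho>. X i \<rho> + Zdiv r a ((i + 1) mod r) \<rho> - Zdiv r a i \<rho>)"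
proof
  fix \<rho>
  have "X i + Zdiv r a ((i + 1) mod r) = Zdiv r a i + X ((i + r - a) mod r)"
    using assms unfolding Xcond_def by auto
  then have "(X i + Zdiv r a ((i + 1) mod r)) \<rho> = (Zdiv r a i + X ((i + r - a) mod r)) \<rho>"
    by (rule fun_cong)
  then have "X i \<rho> + Zdiv r a ((i + 1) mod r) \<rho> = Zdiv r a i \<rho> + X ((i + r - a) mod r) \<rho>"
    by simp
  moreover have "i + r - a = i + (r - a)" using assms by simp
  ultimately show "X ((i + (r - a)) mod r) \<rho> = X i \<rho> + Zdiv r a ((i + 1) mod r) \<rho> - Zdiv r a i \<rho>"
    by simp
qed

lemma Xcond_unique:
  assumes "Xcond r a X" "Xcond r a X'" "coprime r a" "a < r"
  shows "X = X'"
proof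
  fix i show "X i = X' i"
  proof (cases "i < r")
    case True
    show ?thesis
    proof
      fix \<rho>
      have "(\<lambda>i. X i \<rho> - X' i \<rho>) i = (\<lambda>i. X i \<rho> - X' i \<rho>) 0"
      proof (rule reach[OF gcd_sa[OF assms(3,4)]])
        show "0 < r" using assms by simp
        show "i < r" by fact
        fix k assume k: "k < r"
        show "X ((k + (r - a)) mod r) \<rho> - X' ((k + (r - a)) mod r) \<rho> = X k \<rho> - X' k \<rho>"
          using Xcond_step[OF assms(1) k assms(4)] Xcond_step[OF assms(2) k assms(4)] by simp
      qed
      moreover have "X 0 = X' 0" using assms unfolding Xcond_def by simp
      ultimately show "X i \<rho> = X' i \<rho>" by simp
    qed
  next
    case False then show ?thesis using assms unfolding Xcond_def by simp
  qed
qed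



definition Nf :: "nat \<Rightarrow> nat \<Rightarrow> nat \<Rightarrow> nat" where
  "Nf r s i = (THE n. n < r \<and> (n*s) mod r = i)"

lemma Nf_props:
  assumes "coprime s r" "0 < r" "i < r"
  shows "Nf r s i < r \<and> (Nf r s i * s) mod r = i"
proof -
  have "i \<in> (\<lambda>k. (0 + k*s) mod r) ` {0..<r}"
    using chain_bij[OF assms(1,2), of 0] assms(3) by (simp add: bij_betw_def)
  then obtain n where n: "n < r" "(n*s) mod r = i" by auto
  have "\<exists>!n. n < r \<and> (n*s) mod r = i"
  proof (rule ex1I[of _ n])
    show "n < r \<and> n * s mod r = i" using n by simp
    fix m assume "m < r \<and> m * s mod r = i"
    then show "m = n" using chain_inj[OF assms(1), of m n 0] n by simp
  qed
  then show ?thesis unfolding Nf_def by (rule theI')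
qed

lemma Nf_eq:
  assumes "coprime s r" "n < r"
  shows "Nf r s ((n*s) mod r) = n"
proof -
  have "Nf r s ((n*s) mod r) < r \<and> (Nf r s ((n*s) mod r) * s) mod r = (n*s) mod r"
    using Nf_props[OF assms(1)] assms(2) by simp
  then show ?thesis using chain_inj[OF assms(1), of "Nf r s ((n*s) mod r)" n 0] assms(2) by simp
qed

lemma Xexists:
  assumes cp: "coprime (r::nat) a" and a: "0 < a" "a < r"
  shows "\<exists>X. Xcond r a X"
proof -
  define s where "s = r - a"
  have cs: "coprime s r" using gcd_sa[OF cp a(2)] s_def by simp
  have r0: "0 < r" using a by simp
  define h where "h i \<rho> = Zdiv r a ((i + 1) mod r) \<rho> - Zdiv r a i \<rho>" for i \<rho>
  define g where "g \<rho> t = h ((t*s) mod r) \<rho>" for \<rho> t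
  define X where "X i = (if i < r then (\<lambda>\<rho>. E1 \<rho> + (\<Sum>t<Nf r s i. g \<rho> t)) else 0)" for i
  have tot: "(\<Sum>t<r. g \<rho> t) = 0" for \<rho>
  proof -
    have "(\<Sum>t<r. g \<rho> t) = (\<Sum>t\<in>{0..<r}. h ((0 + t*s) mod r) \<rho>)"
      unfolding g_def by (simp add: lessThan_atLeast0)
    also have "\<dots> = (\<Sum>i\<in>{0..<r}. h i \<rho>)"
      by (rule sum.reindex_bij_betw[OF chain_bij[OF cs r0]])
    also have "\<dots> = (\<Sum>i\<in>{0..<r}. Zdiv r a ((1 + i*1) mod r) \<rho>) - (\<Sum>i\<in>{0..<r}. Zdiv r a i \<rho>)"
      unfolding h_def by (simp add: sum_subtractf add.commute)
    also have "(\<Sum>i\<in>{0..<r}. Zdiv r a ((1 + i*1) mod r) \<rho>) = (\<Sum>i\<in>{0..<r}. Zdiv r a i \<rho>)"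
      by (rule sum.reindex_bij_betw[OF chain_bij[OF _ r0]]) simp
    finally show ?thesis by simp
  qed
  have "Xcond r a X"
    unfolding Xcond_def
  proof (intro conjI allI impI)
    have "Nf r s 0 = 0" using Nf_eq[OF cs r0] by simp
    then show "X 0 = E1" unfolding X_def using r0 by simp
  next
    fix i :: nat assume "r \<le> i" then show "X i = 0" unfolding X_def by simp
  next
    fix i assume i: "i < r"
    define n where "n = Nf r s i"
    have n: "n < r" "(n*s) mod r = i" using Nf_props[OF cs r0 i] n_def by auto
    have ir: "i + r - a = i + s" using s_def a by simp
    have isn: "(i + s) mod r = (Suc n * s) mod r"
    proof -
      have "(Suc n * s) mod r = (n*s + s) mod r" by (simp add: add.commute)
      also have "\<dots> = ((n*s) mod r + s) mod r" by (simp add: mod_add_left_eq)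
      finally show ?thesis using n by simp
    qed
    have ghi: "g \<rho> n = h i \<rho>" for \<rho> unfolding g_def using n by simp
    show "X i + Zdiv r a ((i + 1) mod r) = Zdiv r a i + X ((i + r - a) mod r)"
    proof
      fix \<rho>
      have Xi: "X i \<rho> = E1 \<rho> + (\<Sum>t<n. g \<rho> t)" unfolding X_def n_def using i by simp
      show "(X i + Zdiv r a ((i + 1) mod r)) \<rho> = (Zdiv r a i + X ((i + r - a) mod r)) \<rho>"
      proof (cases "Suc n < r")
        case True
        have "Nf r s ((i + s) mod r) = Suc n" unfolding isn using Nf_eq[OF cs True] .
        then have "X ((i + r - a) mod r) \<rho> = E1 \<rho> + (\<Sum>t<Suc n. g \<rho> t)"
          unfolding X_def ir using r0 by simp
        then show ?thesis using Xi ghi[of \<rho>] unfolding h_def by simp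
      next
        case False
        then have nr: "Suc n = r" using n by simp
        have "(i + s) mod r = 0" unfolding isn nr by simp
        moreover have "Nf r s 0 = 0" using Nf_eq[OF cs r0] by simp
        ultimately have "X ((i + r - a) mod r) \<rho> = E1 \<rho>"
          unfolding X_def ir using r0 by simp
        moreover have "(\<Sum>t<Suc n. g \<rho> t) = 0" using tot nr by simp
        ultimately show ?thesis using Xi ghi[of \<rho>] unfolding h_def by simp
      qed
    qed
  qed
  then show ?thesis by blast
qed

lemma Xdiv_cond:
  assumes "coprime (r::nat) a" "0 < a" "a < r"
  shows "Xcond r a (Xdiv r a)"
proof -
  have "\<exists>!X. Xcond r a X"
    using Xexists[OF assms] Xcond_unique[OF _ _ assms(1,3)] by blast
  then have "Xcond r a (THE X. Xcond r a X)" by (rule theI')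
  then show ?thesis unfolding Xdiv_def Xcond_def by simp
qed

lemma Xdiv_None:
  assumes "coprime (r::nat) a" "0 < a" "a < r" "i < r"
  shows "Xdiv r a i None = 1"
proof -
  have c: "Xcond r a (Xdiv r a)" by (rule Xdiv_cond[OF assms(1-3)])
  have "Xdiv r a i None = Xdiv r a 0 None"
  proof (rule reach[OF gcd_sa[OF assms(1,3)], where f = "\<lambda>i. Xdiv r a i None"])
    show "0 < r" "i < r" using assms by auto
    fix k assume "k < r"
    then show "Xdiv r a ((k + (r - a)) mod r) None = Xdiv r a k None"
      using Xcond_step[OF c _ assms(3)] by (simp add: Z_None)
  qed
  also have "\<dots> = 1" using c unfolding Xcond_def by (simp add: E1_def primD_def)
  finally show ?thesis .
qed



lemma sbp:
  fixes th e :: "nat \<Rightarrow> rat"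
  shows "(\<Sum>q<Suc n. th q * e q) =
    (\<Sum>q<n. (\<Sum>k<Suc q. th k) * (e q - e (Suc q))) + (\<Sum>k<Suc n. th k) * e n"
proof (induction n)
  case 0 then show ?case by simp
next
  case (Suc n)
  have "(\<Sum>q<Suc (Suc n). th q * e q) = (\<Sum>q<Suc n. th q * e q) + th (Suc n) * e (Suc n)"
    by simp
  also have "\<dots> = (\<Sum>q<n. (\<Sum>k<Suc q. th k) * (e q - e (Suc q))) + (\<Sum>k<Suc n. th k) * e n
       + th (Suc n) * e (Suc n)" using Suc by simp
  also have "\<dots> = (\<Sum>q<Suc n. (\<Sum>k<Suc q. th k) * (e q - e (Suc q)))
       + (\<Sum>k<Suc (Suc n). th k) * e (Suc n)"
    by (simp add: algebra_simps)
  finally show ?case .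
qed

lemma change_point:
  fixes e :: "nat \<Rightarrow> bool"
  assumes "q0 < n" "q1 < n" "e q0 \<noteq> e q1"
  shows "\<exists>q. Suc q < n \<and> e q \<noteq> e (Suc q)"
proof (rule ccontr)
  assume "\<not> ?thesis"
  then have h: "Suc q < n \<Longrightarrow> e q = e (Suc q)" for q by blast
  have "q < n \<Longrightarrow> e q = e 0" for q
    by (induction q) (use h in auto)
  then show False using assms by metis
qed

lemma FY: "Fj r a j (ArrY m) \<noteq> 0 \<longleftrightarrow> tau r a ((m + a) mod r) < j"
  unfolding Fj_def Frep_def by (simp add: mono_val Y_Some Y_None)

lemma FZ: "j < r \<Longrightarrow> Fj r a j (ArrZ i) \<noteq> 0 \<longleftrightarrow> j < tau r a (i mod r)"
  unfolding Fj_def Frep_def by (auto simp: mono_val Z_Some Z_None)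

lemma FX: "coprime (r::nat) a \<Longrightarrow> 0 < a \<Longrightarrow> a < r \<Longrightarrow> i < r \<Longrightarrow> Fj r a j (ArrX i) = 0"
  unfolding Fj_def Frep_def using mono_val[of j "Xdiv r a i"] Xdiv_None[of r a i] by simp

locale chainctx =
  fixes r a j :: nat
  assumes r1: "1 < r" and a0: "0 < a" and ar: "a < r" and cp: "coprime r a" and jr: "j < r"
begin

definition s where "s = r - a"
definition xx where "xx = xi r a j"
definition c where "c q = (xx + s + q*s) mod r" for q

lemma cs: "coprime s r" using gcd_sa[OF cp ar] s_def by simp
lemma sa: "s + a = r" using ar s_def by simp

lemma xx_props: "xx < r" "tau r a xx = j" "\<And>v. v < r \<Longrightarrow> tau r a v = j \<Longrightarrow> v = xx"
proof -
  have b: "bij_betw (tau r a) {0..<r} {0..<r}" using tau_bij[OF _ ar cp] r1 by simp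
  have "j \<in> tau r a ` {0..<r}" using b jr by (simp add: bij_betw_def)
  then obtain i where i: "i < r" "tau r a i = j" by auto
  have u: "\<exists>!i. i < r \<and> tau r a i = j"
  proof (rule ex1I[of _ i])
    show "i < r \<and> tau r a i = j" using i by simp
    fix m assume "m < r \<and> tau r a m = j"
    then show "m = i" using b i unfolding bij_betw_def inj_on_def by auto
  qed
  have "xx < r \<and> tau r a xx = j" unfolding xx_def xi_def using theI'[OF u] .
  then show "xx < r" "tau r a xx = j" by auto
  fix v assume "v < r" "tau r a v = j"
  then show "v = xx" using u \<open>xx < r \<and> tau r a xx = j\<close> by auto
qed

lemma c_lt: "c q < r" unfolding c_def using r1 by simp

lemma c_inj: "q < r \<Longrightarrow> q' < r \<Longrightarrow> c q = c q' \<Longrightarrow> q = q'"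
  unfolding c_def using chain_inj[OF cs] by blast

lemma c_bij: "bij_betw c {0..<r} {0..<r}"
  unfolding c_def using chain_bij[OF cs _, of "xx + s"] r1 by simp

lemma c_mem: "k < r \<Longrightarrow> B \<subseteq> {0..<r} \<Longrightarrow> c k \<in> c ` B \<Longrightarrow> k \<in> B"
proof -
  assume k: "k < r" and B: "B \<subseteq> {0..<r}" and "c k \<in> c ` B"
  then obtain k0 where "k0 \<in> B" "c k = c k0" by auto
  moreover have "k0 < r" using B \<open>k0 \<in> B\<close> by auto
  ultimately show "k \<in> B" using c_inj[OF k] by metis
qed

lemma c_surj: "i < r \<Longrightarrow> \<exists>k<r. i = c k"
proof -
  assume "i < r"
  then have "i \<in> c ` {0..<r}" using c_bij by (simp add: bij_betw_def)
  then show ?thesis by auto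
qed

lemma c_shift: "(c p + n*s) mod r = c (p + n)"
proof -
  have "(c p + n*s) mod r = (xx + s + p*s + n*s) mod r" unfolding c_def by (simp add: mod_add_left_eq)
  then show ?thesis unfolding c_def by (simp add: algebra_simps)
qed

lemma c_last: "c (r - 1) = xx"
proof -
  obtain m where m: "r = Suc m" using r1 by (cases r) auto
  have e: "xx + s + (r - 1) * s = xx + r * s" unfolding m by simp
  show ?thesis unfolding c_def e using xx_props(1) by simp
qed

lemma c_succ: "(c q + (r - a)) mod r = c (Suc q)"
  using c_shift[of q 1] s_def by simp

lemma c_pred: "(c (Suc q) + a) mod r = c q"
proof -
  have "(c (Suc q) + a) mod r = (xx + s + Suc q * s + a) mod r"
    unfolding c_def by (simp add: mod_add_left_eq)
  also have "xx + s + Suc q * s + a = (xx + s + q*s) + r" using sa by (simp add: algebra_simps)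
  finally show ?thesis unfolding c_def by simp
qed

lemma c0_pred: "(c 0 + a) mod r = xx"
proof -
  have "(c 0 + a) mod r = (xx + s + a) mod r" unfolding c_def by (simp add: mod_add_left_eq)
  then show ?thesis using sa xx_props(1) by (simp add: add.assoc)
qed

lemma tau_c: "Suc q < r \<Longrightarrow> tau r a (c q) \<noteq> j"
proof
  assume q: "Suc q < r" and t: "tau r a (c q) = j"
  then have "c q = xx" using xx_props(3) c_lt by blast
  then have "c q = c (r - 1)" using c_last by simp
  then have "q = r - 1" using c_inj q by simp
  then show False using q by simp
qed

lemma V_eq: assumes "p < r" shows "Vset r a (c p) j = c ` {p..<r}"
proof -
  have L: "(LEAST n. (c p + n * (r - a)) mod r = xi r a j) = r - 1 - p"
  proof (rule Least_equality)
    show "(c p + (r - 1 - p) * (r - a)) mod r = xi r a j"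
      using c_shift[of p "r - 1 - p"] c_last assms s_def xx_def by simp
    fix n assume n: "(c p + n * (r - a)) mod r = xi r a j"
    show "r - 1 - p \<le> n"
    proof (rule ccontr)
      assume "\<not> r - 1 - p \<le> n"
      then have "p + n < r - 1" by simp
      moreover have "c (p + n) = c (r - 1)" using n c_shift[of p n] c_last s_def xx_def by simp
      moreover have "p + n < r" "r - 1 < r" using \<open>p + n < r - 1\<close> r1 by linarith+
      ultimately show False using c_inj[of "p+n" "r - 1"] by linarith
    qed
  qed
  show ?thesis unfolding Vset_def Let_def L
  proof (rule set_eqI, rule iffI)
    fix x assume "x \<in> {(c p + k * (r - a)) mod r |k. k \<le> r - 1 - p}"
    then obtain k where k: "k \<le> r - 1 - p" "x = (c p + k * (r - a)) mod r" by blast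
    then have "x = c (p + k)" using c_shift[of p k] s_def by simp
    moreover have "p + k \<in> {p..<r}" using k assms r1 by auto
    ultimately show "x \<in> c ` {p..<r}" by blast
  next
    fix x assume "x \<in> c ` {p..<r}"
    then obtain q where q: "q \<in> {p..<r}" "x = c q" by blast
    have "x = (c p + (q - p) * (r - a)) mod r" using c_shift[of p "q - p"] s_def q by simp
    moreover have "q - p \<le> r - 1 - p" using q by auto
    ultimately show "x \<in> {(c p + k * (r - a)) mod r |k. k \<le> r - 1 - p}" by blast
  qed
qed

lemma W_eq: assumes "p < r" shows "Wset r a (c p) j = c ` {0..p}"
proof -
  have sh: "(xi r a j + m * (r - a)) mod r = c (m - 1)" if m1: "1 \<le> m" for m
  proof -
    obtain m' where m': "m = Suc m'" using m1 by (cases m) auto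
    have "xi r a j + m * (r - a) = xx + s + (m - 1) * s" using s_def xx_def unfolding m' by simp
    then show ?thesis unfolding c_def by simp
  qed
  have L: "(LEAST m. 1 \<le> m \<and> (xi r a j + m * (r - a)) mod r = c p) = Suc p"
  proof (rule Least_equality)
    show "1 \<le> Suc p \<and> (xi r a j + Suc p * (r - a)) mod r = c p" using sh[of "Suc p"] by simp
    fix m assume m: "1 \<le> m \<and> (xi r a j + m * (r - a)) mod r = c p"
    show "Suc p \<le> m"
    proof (rule ccontr)
      assume "\<not> Suc p \<le> m"
      then have "m - 1 < p" using m by arith
      moreover have m1': "1 \<le> m" and m2: "(xi r a j + m * (r - a)) mod r = c p" using m by auto
      then have "c (m - 1) = c p" using sh[OF m1'] by simp
      ultimately show False using c_inj[of "m - 1" p] assms by simp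
    qed
  qed
  show ?thesis unfolding Wset_def Let_def L
  proof (rule set_eqI, rule iffI)
    fix x assume "x \<in> {(xi r a j + k * (r - a)) mod r |k. 1 \<le> k \<and> k \<le> Suc p}"
    then obtain k where k: "1 \<le> k" "k \<le> Suc p" "x = (xi r a j + k * (r - a)) mod r" by blast
    then have "x = c (k - 1)" using sh[of k] by simp
    moreover have "k - 1 \<in> {0..p}" using k by auto
    ultimately show "x \<in> c ` {0..p}" by blast
  next
    fix x assume "x \<in> c ` {0..p}"
    then obtain q where q: "q \<in> {0..p}" "x = c q" by blast
    have "x = (xi r a j + Suc q * (r - a)) mod r" using sh[of "Suc q"] q by simp
    moreover have "1 \<le> Suc q \<and> Suc q \<le> Suc p" using q by auto
    ultimately show "x \<in> {(xi r a j + k * (r - a)) mod r |k. 1 \<le> k \<and> k \<le> Suc p}" by blast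
  qed
qed

lemma arrow_cases:
  assumes "\<alpha> \<in> arrows r"
  obtains i where "i < r" "\<alpha> = ArrX i" | i where "i < r" "\<alpha> = ArrY i" | i where "i < r" "\<alpha> = ArrZ i"
  using assms unfolding arrows_def by blast

lemma subrepI:
  assumes "A \<subseteq> {0..<r}"
    and "\<And>k. k < r \<Longrightarrow> c k \<in> A \<Longrightarrow> tau r a ((c k + a) mod r) < j \<Longrightarrow> (c k + a) mod r \<in> A"
    and "\<And>k. k < r \<Longrightarrow> c k \<in> A \<Longrightarrow> j < tau r a (c k) \<Longrightarrow> (c k + (r - a)) mod r \<in> A"
  shows "is_subrep r a (Fj r a j) A"
  unfolding is_subrep_def
proof (intro conjI ballI impI)
  show "A \<subseteq> {0..<r}" by fact
  fix \<alpha> assume al: "\<alpha> \<in> arrows r" and h: "arr_tail r a \<alpha> \<in> A \<and> Fj r a j \<alpha> \<noteq> 0"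
  from al show "arr_head r a \<alpha> \<in> A"
  proof (cases rule: arrow_cases)
    case (1 i) then show ?thesis using h FX[OF cp a0 ar] by simp
  next
    case (2 i)
    then obtain k where k: "k < r" "i = c k" using c_surj by blast
    show ?thesis using h 2 k assms(2)[of k] FY[of r a j] unfolding arr_tail_def arr_head_def by simp
  next
    case (3 i)
    then obtain k where k: "k < r" "i = c k" using c_surj by blast
    have "i + r - a = c k + (r - a)" using k ar by simp
    then show ?thesis using h 3 k assms(3)[of k] FZ[OF jr, of a i] c_lt
      unfolding arr_tail_def arr_head_def by simp
  qed
qed

lemma W_sub: assumes "Suc q < r" "tau r a (c q) < j"
  shows "is_subrep r a (Fj r a j) (c ` {0..q})"
proof (rule subrepI)
  show "c ` {0..q} \<subseteq> {0..<r}" using c_lt by auto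
next
  fix k assume k: "k < r" "c k \<in> c ` {0..q}" "tau r a ((c k + a) mod r) < j"
  moreover have "{0..q} \<subseteq> {0..<r}" using assms by auto
  ultimately have kq: "k \<le> q" using c_mem[of k "{0..q}"] by simp
  show "(c k + a) mod r \<in> c ` {0..q}"
  proof (cases k)
    case 0 then show ?thesis using k c0_pred xx_props(2) by simp
  next
    case (Suc k') then show ?thesis using c_pred[of k'] kq by auto
  qed
next
  fix k assume k: "k < r" "c k \<in> c ` {0..q}" "j < tau r a (c k)"
  moreover have "{0..q} \<subseteq> {0..<r}" using assms by auto
  ultimately have kq: "k \<le> q" using c_mem[of k "{0..q}"] by simp
  have "k \<noteq> q" using k assms by auto
  then show "(c k + (r - a)) mod r \<in> c ` {0..q}" using c_succ[of k] kq by auto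
qed

lemma V_sub: assumes "Suc q < r" "j < tau r a (c q)"
  shows "is_subrep r a (Fj r a j) (c ` {Suc q..<r})"
proof (rule subrepI)
  show "c ` {Suc q..<r} \<subseteq> {0..<r}" using c_lt by auto
next
  fix k assume k: "k < r" "c k \<in> c ` {Suc q..<r}" "tau r a ((c k + a) mod r) < j"
  then have kq: "Suc q \<le> k" using c_mem[of k "{Suc q..<r}"] by simp
  then obtain k' where k': "k = Suc k'" by (cases k) auto
  have "k' \<noteq> q" using k k' c_pred[of k'] assms by auto
  then show "(c k + a) mod r \<in> c ` {Suc q..<r}" using c_pred[of k'] k' kq k by auto
next
  fix k assume k: "k < r" "c k \<in> c ` {Suc q..<r}" "j < tau r a (c k)"
  then have kq: "Suc q \<le> k" using c_mem[of k "{Suc q..<r}"] by simp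
  have "k \<noteq> r - 1" using k c_last xx_props(2) by auto
  then show "(c k + (r - a)) mod r \<in> c ` {Suc q..<r}" using c_succ[of k] kq k by auto
qed

lemma theta_c: "A \<subseteq> {0..<r} \<Longrightarrow> theta_of \<theta> (c ` A) = (\<Sum>k\<in>A. \<theta> (c k))"
  unfolding theta_of_def
proof -
  assume A: "A \<subseteq> {0..<r}"
  have "inj_on c A"
  proof (rule inj_onI)
    fix x y assume "x \<in> A" "y \<in> A" "c x = c y"
    moreover have "x < r" "y < r" using A \<open>x \<in> A\<close> \<open>y \<in> A\<close> by auto
    ultimately show "x = y" using c_inj by blast
  qed
  then show "(\<Sum>i\<in>c ` A. \<theta> i) = (\<Sum>k\<in>A. \<theta> (c k))" by (simp add: sum.reindex)
qed

end



context chainctx begin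

definition Pf where "Pf \<theta> q = (\<Sum>k<Suc q. \<theta> (c k))"
definition EE where "EE S q = (if c q \<in> S then 1 else (0::rat))"

lemma sub_le: "is_subrep r a (Fj r a j) S \<Longrightarrow> S \<subseteq> {0..<r}"
  unfolding is_subrep_def by simp

lemma total: "\<theta> \<in> Theta r \<Longrightarrow> (\<Sum>k<r. \<theta> (c k)) = 0"
proof -
  assume th: "\<theta> \<in> Theta r"
  have "(\<Sum>k<r. \<theta> (c k)) = theta_of \<theta> (c ` {0..<r})"
    using theta_c[of "{0..<r}" \<theta>] by (simp add: lessThan_atLeast0)
  also have "c ` {0..<r} = {0..<r}" using c_bij by (simp add: bij_betw_def)
  finally show ?thesis using th unfolding Theta_def theta_of_def by (simp add: lessThan_atLeast0)
qed

lemma key: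
  assumes th: "\<theta> \<in> Theta r" and S: "is_subrep r a (Fj r a j) S"
  shows "theta_of \<theta> S = (\<Sum>q<r-1. Pf \<theta> q * (EE S q - EE S (Suc q)))"
proof -
  have Sr: "S \<subseteq> {0..<r}" using sub_le[OF S] .
  have Seq: "S = c ` {q \<in> {0..<r}. c q \<in> S}"
  proof
    show "S \<subseteq> c ` {q \<in> {0..<r}. c q \<in> S}"
    proof
      fix v assume v: "v \<in> S"
      then have "v < r" using Sr by auto
      then obtain k where "k < r" "v = c k" using c_surj by blast
      then show "v \<in> c ` {q \<in> {0..<r}. c q \<in> S}" using v by auto
    qed
  qed auto
  have "theta_of \<theta> S = (\<Sum>k\<in>{q \<in> {0..<r}. c q \<in> S}. \<theta> (c k))"
    by (subst Seq, rule theta_c) auto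
  also have "\<dots> = (\<Sum>q\<in>{0..<r}. if c q \<in> S then \<theta> (c q) else 0)"
    by (rule sum.inter_filter) simp
  also have "\<dots> = (\<Sum>q<Suc (r - 1). \<theta> (c q) * EE S q)"
    using r1 by (auto simp: EE_def lessThan_atLeast0 intro!: sum.cong)
  also have "\<dots> = (\<Sum>q<r-1. Pf \<theta> q * (EE S q - EE S (Suc q))) + (\<Sum>k<Suc (r-1). \<theta> (c k)) * EE S (r - 1)"
    unfolding Pf_def by (rule sbp)
  also have "(\<Sum>k<Suc (r-1). \<theta> (c k)) = 0" using total[OF th] r1 by simp
  finally show ?thesis by simp
qed

lemma termW:
  assumes S: "is_subrep r a (Fj r a j) S" and q: "Suc q < r" and in1: "c q \<in> S" and out: "c (Suc q) \<notin> S"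
  shows "Wset r a (c q) j \<noteq> {} \<and> Wset r a (c q) j \<subset> {0..<r} \<and>
         is_subrep r a (Fj r a j) (Wset r a (c q) j) \<and> theta_of \<theta> (Wset r a (c q) j) = Pf \<theta> q"
proof -
  have arr: "ArrZ (c q) \<in> arrows r" using c_lt unfolding arrows_def by auto
  have hd: "arr_head r a (ArrZ (c q)) = c (Suc q)"
    unfolding arr_head_def using c_succ[of q] ar by (simp add: add_diff_eq[symmetric] less_imp_le)
  have "Fj r a j (ArrZ (c q)) = 0"
    using S arr in1 out hd unfolding is_subrep_def arr_tail_def by force
  then have "\<not> j < tau r a (c q)" using FZ[OF jr, of a "c q"] c_lt by simp
  then have lt: "tau r a (c q) < j" using tau_c[OF q] by simp
  have W: "Wset r a (c q) j = c ` {0..q}" using W_eq q by simp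
  have "c (r - 1) \<notin> c ` {0..q}"
  proof
    assume "c (r - 1) \<in> c ` {0..q}"
    moreover have "{0..q} \<subseteq> {0..<r}" "r - 1 < r" using q r1 by auto
    ultimately have "r - 1 \<in> {0..q}" using c_mem[of "r - 1" "{0..q}"] by blast
    then show False using q by auto
  qed
  moreover have "c (r - 1) \<in> {0..<r}" using c_lt by simp
  moreover have "c ` {0..q} \<subseteq> {0..<r}" using c_lt by auto
  ultimately have pr: "c ` {0..q} \<subset> {0..<r}" by blast
  have "{0..q} \<subseteq> {0..<r}" using q by auto
  then have "theta_of \<theta> (c ` {0..q}) = (\<Sum>k\<in>{0..q}. \<theta> (c k))" by (rule theta_c)
  also have "\<dots> = Pf \<theta> q" unfolding Pf_def by (simp add: atLeast0AtMost lessThan_Suc_atMost)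
  finally show ?thesis using W pr W_sub[OF q lt] by auto
qed

lemma termV:
  assumes th: "\<theta> \<in> Theta r" and S: "is_subrep r a (Fj r a j) S" and q: "Suc q < r"
    and out: "c q \<notin> S" and in1: "c (Suc q) \<in> S"
  shows "Vset r a (c (Suc q)) j \<noteq> {} \<and> Vset r a (c (Suc q)) j \<subset> {0..<r} \<and>
         is_subrep r a (Fj r a j) (Vset r a (c (Suc q)) j) \<and>
         theta_of \<theta> (Vset r a (c (Suc q)) j) = - Pf \<theta> q"
proof -
  have arr: "ArrY (c (Suc q)) \<in> arrows r" using c_lt unfolding arrows_def by auto
  have hd: "arr_head r a (ArrY (c (Suc q))) = c q"
    unfolding arr_head_def using c_pred[of q] by simp
  have "Fj r a j (ArrY (c (Suc q))) = 0"
    using S arr in1 out hd unfolding is_subrep_def arr_tail_def by force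
  then have "\<not> tau r a ((c (Suc q) + a) mod r) < j" using FY[of r a j "c (Suc q)"] by blast
  then have "\<not> tau r a (c q) < j" using c_pred[of q] by simp
  then have lt: "j < tau r a (c q)" using tau_c[OF q] by simp
  have V: "Vset r a (c (Suc q)) j = c ` {Suc q..<r}" using V_eq q by simp
  have "c 0 \<notin> c ` {Suc q..<r}"
  proof
    assume "c 0 \<in> c ` {Suc q..<r}"
    then have "0 \<in> {Suc q..<r}" using c_mem[of 0 "{Suc q..<r}"] r1 by auto
    then show False by auto
  qed
  moreover have "c 0 \<in> {0..<r}" using c_lt by simp
  moreover have "c ` {Suc q..<r} \<subseteq> {0..<r}" using c_lt by auto
  ultimately have pr: "c ` {Suc q..<r} \<subset> {0..<r}" by blast
  have "theta_of \<theta> (c ` {Suc q..<r}) = (\<Sum>k\<in>{Suc q..<r}. \<theta> (c k))" using theta_c by auto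
  also have "\<dots> = (\<Sum>k\<in>{0..<r}. \<theta> (c k)) - (\<Sum>k\<in>{0..<Suc q}. \<theta> (c k))"
    using sum.atLeastLessThan_concat[of 0 "Suc q" r "\<lambda>k. \<theta> (c k)"] q by simp
  also have "\<dots> = - Pf \<theta> q" using total[OF th] unfolding Pf_def by (simp add: lessThan_atLeast0)
  finally show ?thesis using V pr V_sub[OF q lt] q by auto
qed

lemma change:
  assumes S: "is_subrep r a (Fj r a j) S" "S \<noteq> {}" "S \<noteq> {0..<r}"
  shows "\<exists>q. Suc q < r \<and> (c q \<in> S) \<noteq> (c (Suc q) \<in> S)"
proof -
  have Sr: "S \<subseteq> {0..<r}" using sub_le[OF S(1)] .
  obtain v where v: "v \<in> S" using S(2) by auto
  then obtain q0 where q0: "q0 < r" "v = c q0" using c_surj Sr by force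
  have "\<not> {0..<r} \<subseteq> S" using S(3) Sr by blast
  then obtain w0 where "w0 \<in> {0..<r}" "w0 \<notin> S" by blast
  then obtain w where w: "w < r" "w \<notin> S" by auto
  then obtain q1 where q1: "q1 < r" "w = c q1" using c_surj by force
  show ?thesis
    by (rule change_point[of q0 r q1 "\<lambda>q. c q \<in> S"]) (use q0 q1 v w in auto)
qed

lemma rev_stable:
  assumes th: "\<theta> \<in> Theta r"
    and hV: "\<forall>i<r. Vset r a i j \<noteq> {} \<and> Vset r a i j \<subset> {0..<r} \<and>
                    is_subrep r a (Fj r a j) (Vset r a i j) \<longrightarrow> theta_of \<theta> (Vset r a i j) > 0"
    and hW: "\<forall>i<r. Wset r a i j \<noteq> {} \<and> Wset r a i j \<subset> {0..<r} \<and>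
                    is_subrep r a (Fj r a j) (Wset r a i j) \<longrightarrow> theta_of \<theta> (Wset r a i j) > 0"
    and S: "is_subrep r a (Fj r a j) S" "S \<noteq> {}" "S \<noteq> {0..<r}"
  shows "theta_of \<theta> S > 0"
proof -
  have tq: "Pf \<theta> q * (EE S q - EE S (Suc q)) > 0" if q: "Suc q < r" and d: "(c q \<in> S) \<noteq> (c (Suc q) \<in> S)" for q
  proof (cases "c q \<in> S")
    case True
    then have out: "c (Suc q) \<notin> S" using d by simp
    have "theta_of \<theta> (Wset r a (c q) j) > 0" using termW[OF S(1) q True out] hW c_lt by blast
    then show ?thesis using termW[OF S(1) q True out] True out by (simp add: EE_def)
  next
    case False
    then have in1: "c (Suc q) \<in> S" using d by simp
    have "theta_of \<theta> (Vset r a (c (Suc q)) j) > 0" using termV[OF th S(1) q False in1] hV c_lt by blast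
    then show ?thesis using termV[OF th S(1) q False in1] False in1 by (simp add: EE_def)
  qed
  have t0: "Pf \<theta> q * (EE S q - EE S (Suc q)) \<ge> 0" if q: "q \<in> {..<r-1}" for q
  proof (cases "(c q \<in> S) = (c (Suc q) \<in> S)")
    case True then show ?thesis by (simp add: EE_def)
  next
    case False then show ?thesis using tq[of q] q by fastforce
  qed
  obtain q where q: "Suc q < r" "(c q \<in> S) \<noteq> (c (Suc q) \<in> S)" using change[OF S] by blast
  have "(\<Sum>q<r-1. Pf \<theta> q * (EE S q - EE S (Suc q))) > 0"
    by (rule sum_pos2[of _ q]) (use q tq t0 in auto)
  then show ?thesis using key[OF th S(1)] by simp
qed

lemma rev_semistable:
  assumes th: "\<theta> \<in> Theta r"
    and hV: "\<forall>i<r. Vset r a i j \<noteq> {} \<and> Vset r a i j \<subset> {0..<r} \<and>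
                    is_subrep r a (Fj r a j) (Vset r a i j) \<longrightarrow> theta_of \<theta> (Vset r a i j) \<ge> 0"
    and hW: "\<forall>i<r. Wset r a i j \<noteq> {} \<and> Wset r a i j \<subset> {0..<r} \<and>
                    is_subrep r a (Fj r a j) (Wset r a i j) \<longrightarrow> theta_of \<theta> (Wset r a i j) \<ge> 0"
    and S: "is_subrep r a (Fj r a j) S"
  shows "theta_of \<theta> S \<ge> 0"
proof -
  have t0: "Pf \<theta> q * (EE S q - EE S (Suc q)) \<ge> 0" if qq: "q \<in> {..<r-1}" for q
  proof -
    have q: "Suc q < r" using qq by auto
    show ?thesis
    proof (cases "c q \<in> S")
      case True
      show ?thesis
      proof (cases "c (Suc q) \<in> S")
        case True then show ?thesis using \<open>c q \<in> S\<close> by (simp add: EE_def)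
      next
        case out: False
        have "theta_of \<theta> (Wset r a (c q) j) \<ge> 0" using termW[OF S(1) q True out] hW c_lt by blast
        then show ?thesis using termW[OF S(1) q True out] True out by (simp add: EE_def)
      qed
    next
      case False
      show ?thesis
      proof (cases "c (Suc q) \<in> S")
        case False then show ?thesis using \<open>c q \<notin> S\<close> by (simp add: EE_def)
      next
        case in1: True
        have "theta_of \<theta> (Vset r a (c (Suc q)) j) \<ge> 0" using termV[OF th S(1) q False in1] hV c_lt by blast
        then show ?thesis using termV[OF th S(1) q False in1] False in1 by (simp add: EE_def)
      qed
    qed
  qed
  have "(\<Sum>q<r-1. Pf \<theta> q * (EE S q - EE S (Suc q))) \<ge> 0"
    by (rule sum_nonneg) (use t0 in auto)
  then show ?thesis using key[OF th S(1)] by simp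
qed

end

theorem mainTheorem15:
  fixes r a j :: nat and \<theta> :: "nat \<Rightarrow> rat"
  assumes "1 < r" and "0 < a" and "a < r" and "coprime r a"
    and "\<theta> \<in> Theta r" and "j < r"
  shows "(stable r a \<theta> (Fj r a j) \<longleftrightarrow>
            (\<forall>i<r. Vset r a i j \<noteq> {} \<and> Vset r a i j \<subset> {0..<r} \<and>
                    is_subrep r a (Fj r a j) (Vset r a i j)
                    \<longrightarrow> theta_of \<theta> (Vset r a i j) > 0) \<and>
            (\<forall>i<r. Wset r a i j \<noteq> {} \<and> Wset r a i j \<subset> {0..<r} \<and>
                    is_subrep r a (Fj r a j) (Wset r a i j)
                    \<longrightarrow> theta_of \<theta> (Wset r a i j) > 0))
       \<and> (semistable r a \<theta> (Fj r a j) \<longleftrightarrow>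
            (\<forall>i<r. Vset r a i j \<noteq> {} \<and> Vset r a i j \<subset> {0..<r} \<and>
                    is_subrep r a (Fj r a j) (Vset r a i j)
                    \<longrightarrow> theta_of \<theta> (Vset r a i j) \<ge> 0) \<and>
            (\<forall>i<r. Wset r a i j \<noteq> {} \<and> Wset r a i j \<subset> {0..<r} \<and>
                    is_subrep r a (Fj r a j) (Wset r a i j)
                    \<longrightarrow> theta_of \<theta> (Wset r a i j) \<ge> 0))"
proof -
  interpret chainctx r a j using assms by unfold_locales auto
  show ?thesis
  proof (intro conjI iffI)
    assume st: "stable r a \<theta> (Fj r a j)"
    then show "\<forall>i<r. Vset r a i j \<noteq> {} \<and> Vset r a i j \<subset> {0..<r} \<and>
                    is_subrep r a (Fj r a j) (Vset r a i j) \<longrightarrow> theta_of \<theta> (Vset r a i j) > 0"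
      unfolding stable_def by blast
    from st show "\<forall>i<r. Wset r a i j \<noteq> {} \<and> Wset r a i j \<subset> {0..<r} \<and>
                    is_subrep r a (Fj r a j) (Wset r a i j) \<longrightarrow> theta_of \<theta> (Wset r a i j) > 0"
      unfolding stable_def by blast
  next
    assume h: "(\<forall>i<r. Vset r a i j \<noteq> {} \<and> Vset r a i j \<subset> {0..<r} \<and>
                    is_subrep r a (Fj r a j) (Vset r a i j) \<longrightarrow> theta_of \<theta> (Vset r a i j) > 0) \<and>
            (\<forall>i<r. Wset r a i j \<noteq> {} \<and> Wset r a i j \<subset> {0..<r} \<and>
                    is_subrep r a (Fj r a j) (Wset r a i j) \<longrightarrow> theta_of \<theta> (Wset r a i j) > 0)"
    show "stable r a \<theta> (Fj r a j)"
      unfolding stable_def using rev_stable[OF assms(5)] h by blast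
  next
    assume st: "semistable r a \<theta> (Fj r a j)"
    then show "\<forall>i<r. Vset r a i j \<noteq> {} \<and> Vset r a i j \<subset> {0..<r} \<and>
                    is_subrep r a (Fj r a j) (Vset r a i j) \<longrightarrow> theta_of \<theta> (Vset r a i j) \<ge> 0"
      unfolding semistable_def by blast
    from st show "\<forall>i<r. Wset r a i j \<noteq> {} \<and> Wset r a i j \<subset> {0..<r} \<and>
                    is_subrep r a (Fj r a j) (Wset r a i j) \<longrightarrow> theta_of \<theta> (Wset r a i j) \<ge> 0"
      unfolding semistable_def by blast
  next
    assume h: "(\<forall>i<r. Vset r a i j \<noteq> {} \<and> Vset r a i j \<subset> {0..<r} \<and>
                    is_subrep r a (Fj r a j) (Vset r a i j) \<longrightarrow> theta_of \<theta> (Vset r a i j) \<ge> 0) \<and>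
            (\<forall>i<r. Wset r a i j \<noteq> {} \<and> Wset r a i j \<subset> {0..<r} \<and>
                    is_subrep r a (Fj r a j) (Wset r a i j) \<longrightarrow> theta_of \<theta> (Wset r a i j) \<ge> 0)"
    show "semistable r a \<theta> (Fj r a j)"
      unfolding semistable_def using rev_semistable[OF assms(5)] h by blast
  qed
qed


end
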